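(* There is a constant $C>0$ such that for all $a\neq b$ in $\mathbb{R}/\tau\mathbb{Z}$ with $0\notin Z(a,b)$, $$\sum_{n\in Z(a,b)}\frac1{|n|^3}\le C\,\frac{\sum_{n\in Z(a,b)}\frac1{|n|^5}}{\sum_{n\in Z(a,b)}\frac1{n^2}}.$$
   Context: $\tau=\frac{1+\sqrt5}{2}$. For real $x$, $x\bmod\tau$ is its image in $\mathbb{R}/\tau\mathbb{Z}$. For $a,b\in\mathbb{R}/\tau\mathbb{Z}$, $(a,b)$ denotes the open arc from $a$ to $b$ in the positive direction, and $Z(a,b)$ is the set of integers $n$ with $n\bmod\tau\in(a,b)$. The constant $C$ is independent of all variables. *)

theory Defs
  imports "HOL-Analysis.Analysis"
begin

definition tau :: real where
  "tau = (1 + sqrt 5) / 2"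

definition modtau :: "real \<Rightarrow> real" where
  "modtau x = x - tau * of_int \<lfloor>x / tau\<rfloor>"

text \<open>x mod tau lies on the open arc from a mod tau to b mod tau, positive direction.\<close>
definition in_arc :: "real \<Rightarrow> real \<Rightarrow> real \<Rightarrow> bool" where
  "in_arc a b x \<longleftrightarrow> 0 < modtau (x - a) \<and> modtau (x - a) < modtau (b - a)"

definition Zarc :: "real \<Rightarrow> real \<Rightarrow> int set" where
  "Zarc a b = {n. in_arc a b (of_int n)}"

end

theory Submission
  imports Defs
begin

lemma sqrt5_bounds: "2 < sqrt 5" "sqrt 5 < 3"
proof -
  show "2 < sqrt 5" by (rule real_less_rsqrt) simp
  show "sqrt 5 < 3" by (rule real_less_lsqrt) auto
qed

lemma tau_sq: "tau * tau = tau + 1"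
proof -
  have "sqrt 5 * sqrt 5 = 5" by simp
  then show ?thesis unfolding tau_def by (simp add: field_simps)
qed

lemma tau_gt: "3/2 < tau" and tau_lt: "tau < 2"
  using sqrt5_bounds unfolding tau_def by auto

lemma modtau_range: "0 \<le> modtau x" "modtau x < tau"
proof -
  have tp: "tau > 0" using tau_gt by simp
  have "of_int \<lfloor>x / tau\<rfloor> \<le> x / tau" by simp
  then have "tau * of_int \<lfloor>x / tau\<rfloor> \<le> x" using tp by (simp add: le_divide_eq mult.commute)
  then show "0 \<le> modtau x" unfolding modtau_def by simp
  have "x / tau < of_int \<lfloor>x / tau\<rfloor> + 1" by linarith
  then have "x < tau * of_int \<lfloor>x / tau\<rfloor> + tau" using tp by (simp add: field_simps)
  then show "modtau x < tau" unfolding modtau_def by simp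
qed


lemma modtau_char:
  assumes "0 \<le> x - tau * of_int j" "x - tau * of_int j < tau"
  shows "modtau x = x - tau * of_int j"
proof -
  have tp: "tau > 0" using tau_gt by simp
  have "of_int j \<le> x / tau" using assms(1) tp by (simp add: field_simps)
  moreover have "x / tau < of_int j + 1" using assms(2) tp by (simp add: field_simps)
  ultimately have "\<lfloor>x / tau\<rfloor> = j" by linarith
  then show ?thesis unfolding modtau_def by simp
qed

lemma modtau_shift: "modtau (x + tau * of_int j) = modtau x"
proof -
  have "modtau (x + tau * of_int j) = (x + tau * of_int j) - tau * of_int (\<lfloor>x / tau\<rfloor> + j)"
    apply (rule modtau_char)
    using modtau_range[of x] unfolding modtau_def by (auto simp: algebra_simps)
  then show ?thesis unfolding modtau_def by (simp add: algebra_simps)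
qed

lemma modtau_diff: "\<exists>j. modtau x = x - tau * of_int j"
  unfolding modtau_def by blast

lemma quad_nonzero:
  fixes k q :: int
  shows "k * k - k * q - q * q = 0 \<Longrightarrow> k = 0"
proof (induction "nat (\<bar>k\<bar> + \<bar>q\<bar>)" arbitrary: k q rule: less_induct)
  case less
  show ?case
  proof (rule ccontr)
    assume k0: "k \<noteq> 0"
    have ev: "even k \<and> even q"
    proof (rule ccontr)
      assume "\<not> (even k \<and> even q)"
      then have "odd (k * k - k * q - q * q)" by auto
      then show False using less.prems by simp
    qed
    obtain k' where k': "k = 2 * k'" using ev by (meson dvdE)
    obtain q' where q': "q = 2 * q'" using ev by (meson dvdE)
    note kq = k' q'
    have "4 * (k' * k' - k' * q' - q' * q') = 0" using less.prems kq by (simp add: algebra_simps)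
    then have e: "k' * k' - k' * q' - q' * q' = 0" by simp
    have "nat (\<bar>k'\<bar> + \<bar>q'\<bar>) < nat (\<bar>k\<bar> + \<bar>q\<bar>)" using kq k0 by auto
    from less.hyps[OF this e] have "k' = 0" .
    then show False using kq k0 by simp
  qed
qed

lemma bad_approx:
  fixes k q :: int
  assumes "k \<noteq> 0"
  shows "1 \<le> 2 * \<bar>real_of_int k\<bar> * \<bar>real_of_int k - real_of_int q * tau\<bar>"
proof (cases "\<bar>real_of_int k - real_of_int q * tau\<bar> \<ge> 1")
  case True
  have "1 \<le> \<bar>real_of_int k\<bar>" using assms by linarith
  then have "1 * 1 \<le> \<bar>real_of_int k\<bar> * \<bar>real_of_int k - real_of_int q * tau\<bar>"
    using True by (intro mult_mono) auto
  then show ?thesis by simp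
next
  case False
  define psi where "psi = 1 - tau"
  have tt: "tau * tau = tau + 1" by (rule tau_sq)
  have tp: "tau * psi = -1" using tt unfolding psi_def by (simp add: algebra_simps)
  have "(real_of_int k - real_of_int q * tau) * (real_of_int k - real_of_int q * psi)
      = real_of_int k * real_of_int k - real_of_int k * real_of_int q * (tau + psi) + real_of_int q * real_of_int q * (tau * psi)"
    by (simp add: algebra_simps)
  also have "\<dots> = real_of_int (k * k - k * q - q * q)" using tp unfolding psi_def by simp
  finally have prod: "(real_of_int k - real_of_int q * tau) * (real_of_int k - real_of_int q * psi)
      = real_of_int (k * k - k * q - q * q)" .
  have nz: "k * k - k * q - q * q \<noteq> 0" using quad_nonzero assms by blast
  then have one0: "1 \<le> \<bar>real_of_int (k * k - k * q - q * q)\<bar>" by linarith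
  have one: "1 \<le> \<bar>real_of_int k - real_of_int q * tau\<bar> * \<bar>real_of_int k - real_of_int q * psi\<bar>"
    unfolding abs_mult[symmetric] prod by (rule one0)
  have k1: "1 \<le> \<bar>real_of_int k\<bar>" using assms by linarith
  have "\<bar>real_of_int q * tau\<bar> \<le> \<bar>real_of_int k\<bar> + 1" using False by linarith
  then have qt: "\<bar>real_of_int q\<bar> * tau \<le> 2 * \<bar>real_of_int k\<bar>" using k1 tau_gt by (simp add: abs_mult)
  have "\<bar>real_of_int q * psi\<bar> = \<bar>real_of_int q\<bar> * (tau - 1)" unfolding psi_def using tau_gt by (simp add: abs_mult)
  also have "\<dots> \<le> \<bar>real_of_int k\<bar>"
  proof -
    have "\<bar>real_of_int q\<bar> * ((tau - 1) * 2) \<le> \<bar>real_of_int q\<bar> * tau"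
      using tau_lt by (intro mult_left_mono) auto
    then have "\<bar>real_of_int q\<bar> * (tau - 1) * 2 \<le> \<bar>real_of_int q\<bar> * tau" by (simp add: mult.assoc)
    then show ?thesis using qt by linarith
  qed
  finally have "\<bar>real_of_int k - real_of_int q * psi\<bar> \<le> 2 * \<bar>real_of_int k\<bar>" by linarith
  then have "\<bar>real_of_int k - real_of_int q * tau\<bar> * \<bar>real_of_int k - real_of_int q * psi\<bar>
      \<le> \<bar>real_of_int k - real_of_int q * tau\<bar> * (2 * \<bar>real_of_int k\<bar>)"
    by (intro mult_left_mono) auto
  then show ?thesis using one by (simp add: algebra_simps)
qed


lemma step_iter:
  "\<exists>p' q' :: int. of_int p' + of_int q' * tau = (1 - tau)^k * (of_int p + of_int q * tau)
     \<and> of_int p' + of_int q' * (1 - tau) = tau^k * (of_int p + of_int q * (1 - tau))"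
proof (induction k)
  case 0
  show ?case by (intro exI[of _ p] exI[of _ q]) simp
next
  case (Suc k)
  then obtain p' q' :: int where h: "of_int p' + of_int q' * tau = (1 - tau)^k * (of_int p + of_int q * tau)"
     "of_int p' + of_int q' * (1 - tau) = tau^k * (of_int p + of_int q * (1 - tau))" by blast
  have tt: "tau * tau = tau + 1" by (rule tau_sq)
  have e1: "of_int (p' - q') + of_int (- p') * tau = (1 - tau) * (of_int p' + of_int q' * tau)"
  proof -
    have "(1 - tau) * (of_int p' + of_int q' * tau) = of_int p' - of_int p' * tau + of_int q' * tau - of_int q' * (tau * tau)"
      by (simp add: algebra_simps)
    also have "\<dots> = of_int (p' - q') + of_int (- p') * tau" using tt by (simp add: algebra_simps)
    finally show ?thesis by simp
  qed
  have e2: "of_int (p' - q') + of_int (- p') * (1 - tau) = tau * (of_int p' + of_int q' * (1 - tau))"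
  proof -
    have "tau * (of_int p' + of_int q' * (1 - tau)) = of_int p' * tau + of_int q' * tau - of_int q' * (tau * tau)"
      by (simp add: algebra_simps)
    also have "\<dots> = of_int (p' - q') + of_int (- p') * (1 - tau)" using tt by (simp add: algebra_simps)
    finally show ?thesis by simp
  qed
  show ?case
    apply (rule exI[of _ "p' - q'"], rule exI[of _ "- p'"])
    using e1 e2 h by (simp add: mult.assoc)
qed

lemma approx:
  fixes y :: real
  shows "\<exists>p q :: int. \<bar>of_int p + of_int q * tau - y\<bar> \<le> (1 + tau) * (tau - 1)^k
     \<and> \<bar>of_int p + of_int q * (1 - tau)\<bar> \<le> (1 + tau) * tau^k"
proof -
  define psi where "psi = 1 - tau"
  have psi0: "psi \<noteq> 0" and apsi: "\<bar>psi\<bar> = tau - 1" unfolding psi_def using tau_gt by auto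
  have tm: "2 * tau - 1 > 0" using tau_gt by simp
  define z where "z = y / psi^k"
  define t where "t = z / (2 * tau - 1)"
  define s where "s = - t * psi"
  have "s + t * tau = t * (2 * tau - 1)" unfolding s_def psi_def by (simp add: algebra_simps)
  then have st1: "s + t * tau = z" unfolding t_def using tm by simp
  have st2: "s + t * psi = 0" unfolding s_def by simp
  define s0 where "s0 = \<lfloor>s\<rfloor>"
  define t0 where "t0 = \<lfloor>t\<rfloor>"
  have ds: "\<bar>of_int s0 - s\<bar> \<le> 1" "\<bar>of_int t0 - t\<bar> \<le> 1" unfolding s0_def t0_def by linarith+
  have X0: "\<bar>of_int s0 + of_int t0 * tau - z\<bar> \<le> 1 + tau"
  proof -
    have "of_int s0 + of_int t0 * tau - z = (of_int s0 - s) + (of_int t0 - t) * tau" using st1 by (simp add: algebra_simps)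
    moreover have "\<bar>(of_int t0 - t) * tau\<bar> \<le> tau" using ds(2) tau_gt by (simp add: abs_mult mult_le_cancel_right1)
    ultimately show ?thesis using ds(1) by linarith
  qed
  have Y0: "\<bar>of_int s0 + of_int t0 * psi\<bar> \<le> 1 + tau"
  proof -
    have "of_int s0 + of_int t0 * psi = (of_int s0 - s) + (of_int t0 - t) * psi" using st2 by (simp add: algebra_simps)
    moreover have "\<bar>(of_int t0 - t) * psi\<bar> \<le> tau"
    proof -
      have "\<bar>of_int t0 - t\<bar> * \<bar>psi\<bar> \<le> 1 * (tau - 1)" unfolding apsi using ds(2) tau_gt
        by (intro mult_mono) auto
      then show ?thesis by (simp add: abs_mult)
    qed
    ultimately show ?thesis using ds(1) by linarith
  qed
  obtain p q :: int where h: "of_int p + of_int q * tau = psi^k * (of_int s0 + of_int t0 * tau)"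
     "of_int p + of_int q * psi = tau^k * (of_int s0 + of_int t0 * psi)"
    using step_iter[of k s0 t0] unfolding psi_def by blast
  have yz: "y = psi^k * z" unfolding z_def using psi0 by simp
  have "\<bar>of_int p + of_int q * tau - y\<bar> = \<bar>psi\<bar>^k * \<bar>of_int s0 + of_int t0 * tau - z\<bar>"
  proof -
    have "of_int p + of_int q * tau - y = psi^k * (of_int s0 + of_int t0 * tau - z)"
      unfolding h yz by (simp add: algebra_simps)
    then show ?thesis by (simp add: abs_mult power_abs)
  qed
  also have "\<dots> \<le> (tau - 1)^k * (1 + tau)" unfolding apsi using X0 tau_gt by (intro mult_left_mono) auto
  finally have A1: "\<bar>of_int p + of_int q * tau - y\<bar> \<le> (1 + tau) * (tau - 1)^k" by (simp add: mult.commute)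
  have "\<bar>of_int p + of_int q * psi\<bar> = tau^k * \<bar>of_int s0 + of_int t0 * psi\<bar>"
    unfolding h using tau_gt by (simp add: abs_mult)
  also have "\<dots> \<le> tau^k * (1 + tau)" using Y0 tau_gt by (intro mult_left_mono) auto
  finally have A2: "\<bar>of_int p + of_int q * (1 - tau)\<bar> \<le> (1 + tau) * tau^k" unfolding psi_def by (simp add: mult.commute)
  show ?thesis using A1 A2 by blast
qed


lemma density:
  fixes a L :: real
  assumes L0: "0 < L" and Lt: "L < tau"
  shows "\<exists>n::int. 0 < modtau (of_int n - a) \<and> modtau (of_int n - a) < L \<and> L * \<bar>of_int n\<bar> \<le> 80"
proof -
  have t1: "tau - 1 < 1" "0 < tau - 1" using tau_gt tau_lt by auto
  define P where "P = (\<lambda>k::nat. (1 + tau) * (tau - 1)^k < L / 2)"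
  have "\<exists>k. (tau - 1)^k < L / (2 * (1 + tau))"
    using real_arch_pow_inv[of "L / (2 * (1 + tau))" "tau - 1"] L0 tau_gt t1 by auto
  then obtain k0 where "(tau - 1)^k0 < L / (2 * (1 + tau))" by blast
  then have "P k0" unfolding P_def using tau_gt by (simp add: field_simps)
  define k where "k = (LEAST k. P k)"
  have Pk: "P k" unfolding k_def by (rule LeastI) fact
  have "k \<noteq> 0"
  proof
    assume "k = 0"
    then have "(1 + tau) < L / 2" using Pk unfolding P_def by simp
    then show False using Lt tau_gt by simp
  qed
  then obtain j where kj: "k = Suc j" by (cases k) auto
  have "\<not> P j" unfolding k_def by (rule not_less_Least) (metis kj k_def lessI)
  then have nPj: "L / 2 \<le> (1 + tau) * (tau - 1)^j" unfolding P_def by simp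
  have tt: "tau * (tau - 1) = 1" using tau_sq by (simp add: algebra_simps)
  have tj: "(tau - 1)^j * tau^j = 1" by (simp add: power_mult_distrib[symmetric] tt mult.commute)
  have "L / 2 * tau^j \<le> (1 + tau) * (tau - 1)^j * tau^j" using nPj tau_gt by (intro mult_right_mono) auto
  also have "\<dots> = 1 + tau" by (simp add: mult.assoc tj)
  finally have "L / 2 * tau^j \<le> 1 + tau" .
  then have Ltj: "L * tau^j \<le> 6" using tau_lt by simp
  have Ltk: "L * tau^k \<le> 12"
  proof -
    have "L * tau^k = tau * (L * tau^j)" unfolding kj by simp
    also have "\<dots> \<le> 2 * 6" using Ltj tau_lt tau_gt L0 by (intro mult_mono) auto
    finally show ?thesis by simp
  qed
  define y where "y = modtau a + L / 2"
  obtain p q :: int where pq: "\<bar>of_int p + of_int q * tau - y\<bar> \<le> (1 + tau) * (tau - 1)^k"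
     "\<bar>of_int p + of_int q * (1 - tau)\<bar> \<le> (1 + tau) * tau^k"
    using approx[of y k] by blast
  define X where "X = of_int p + of_int q * tau"
  define Y where "Y = of_int p + of_int q * (1 - tau)"
  have Xy: "\<bar>X - y\<bar> < L / 2" using pq(1) Pk unfolding X_def P_def by simp
  have LY: "L * \<bar>Y\<bar> \<le> 36"
  proof -
    have "L * \<bar>Y\<bar> \<le> L * ((1 + tau) * tau^k)" using pq(2) L0 unfolding Y_def by simp
    also have "\<dots> = (1 + tau) * (L * tau^k)" by simp
    also have "\<dots> \<le> 3 * 12" using Ltk tau_lt tau_gt L0 by (intro mult_mono) auto
    finally show ?thesis by simp
  qed
  have ma: "0 \<le> modtau a" "modtau a < tau" by (rule modtau_range)+
  have Xr: "0 < X - modtau a" "X - modtau a < L" using Xy unfolding y_def abs_less_iff by linarith+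
  have aX: "\<bar>X\<bar> \<le> 4" using Xr ma Lt tau_lt by linarith
  obtain ja where ja: "modtau a = a - tau * of_int ja" using modtau_diff by blast
  have "of_int p - a = (X - modtau a) + tau * of_int (- q - ja)" unfolding X_def ja by (simp add: algebra_simps)
  then have "modtau (of_int p - a) = modtau (X - modtau a)" using modtau_shift[where x="X - modtau a" and j="- q - ja"] by simp
  also have "\<dots> = X - modtau a" using modtau_char[where j=0 and x="X - modtau a"] Xr Lt by simp
  finally have mp: "modtau (of_int p - a) = X - modtau a" .
  have pe: "of_int p * (2 * tau - 1) = tau * Y - (1 - tau) * X"
    unfolding X_def Y_def using tau_sq by (simp add: algebra_simps)
  have "\<bar>of_int p\<bar> \<le> \<bar>of_int p\<bar> * (2 * tau - 1)" using tau_gt by (simp add: mult_le_cancel_left1)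
  also have "\<dots> = \<bar>tau * Y - (1 - tau) * X\<bar>"
  proof -
    have "\<bar>of_int p * (2 * tau - 1)\<bar> = \<bar>of_int p\<bar> * (2 * tau - 1)" using tau_gt by (simp add: abs_mult)
    then show ?thesis using pe by simp
  qed
  also have "\<dots> \<le> tau * \<bar>Y\<bar> + (tau - 1) * \<bar>X\<bar>" 
  proof -
    have "\<bar>tau * Y - (1 - tau) * X\<bar> \<le> \<bar>tau * Y\<bar> + \<bar>(1 - tau) * X\<bar>" by (rule abs_triangle_ineq4)
    moreover have "\<bar>tau * Y\<bar> = tau * \<bar>Y\<bar>" using tau_gt by (simp add: abs_mult)
    moreover have "\<bar>(1 - tau) * X\<bar> = (tau - 1) * \<bar>X\<bar>" using tau_gt by (simp add: abs_mult)
    ultimately show ?thesis by simp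
  qed
  also have "\<dots> \<le> 2 * \<bar>Y\<bar> + 1 * \<bar>X\<bar>" using tau_lt tau_gt by (intro add_mono mult_right_mono) auto
  finally have "L * \<bar>of_int p\<bar> \<le> L * (2 * \<bar>Y\<bar> + \<bar>X\<bar>)" using L0 by simp
  also have "\<dots> = 2 * (L * \<bar>Y\<bar>) + L * \<bar>X\<bar>" by (simp add: algebra_simps)
  also have "\<dots> \<le> 2 * 36 + 2 * 4" using LY aX Lt tau_lt L0 by (intro add_mono mult_mono) auto
  finally have "L * \<bar>of_int p\<bar> \<le> 80" by simp
  then show ?thesis using mp Xr by (intro exI[of _ p]) simp
qed

lemma gap:
  assumes n: "n \<in> Zarc a b" and n': "n' \<in> Zarc a b" and ne: "n \<noteq> n'"
  shows "1 < 2 * modtau (b - a) * \<bar>real_of_int n - real_of_int n'\<bar>"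
proof -
  define L where "L = modtau (b - a)"
  have i1: "0 < modtau (of_int n - a)" "modtau (of_int n - a) < L"
    using n unfolding Zarc_def in_arc_def L_def by auto
  have i2: "0 < modtau (of_int n' - a)" "modtau (of_int n' - a) < L"
    using n' unfolding Zarc_def in_arc_def L_def by auto
  obtain j where j: "modtau (of_int n - a) = of_int n - a - tau * of_int j" using modtau_diff by blast
  obtain j' where j': "modtau (of_int n' - a) = of_int n' - a - tau * of_int j'" using modtau_diff by blast
  define d where "d = modtau (of_int n - a) - modtau (of_int n' - a)"
  have dL: "\<bar>d\<bar> < L" using i1 i2 unfolding d_def by linarith
  have de: "d = real_of_int (n - n') - real_of_int (j - j') * tau" unfolding d_def j j' by (simp add: algebra_simps)
  have kk: "n - n' \<noteq> 0" using ne by simp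
  have "1 \<le> 2 * \<bar>real_of_int (n - n')\<bar> * \<bar>d\<bar>" unfolding de by (rule bad_approx[OF kk])
  also have "\<dots> < 2 * \<bar>real_of_int (n - n')\<bar> * L" using dL kk by (intro mult_strict_left_mono) auto
  finally show ?thesis unfolding L_def by (simp add: mult.commute mult.left_commute)
qed


lemma sum_bound:
  fixes f :: "int \<Rightarrow> real" and g :: "nat \<Rightarrow> real" and \<phi> :: "int \<Rightarrow> nat"
  assumes f0: "\<And>n. n \<in> S \<Longrightarrow> 0 \<le> f n" and inj: "inj_on \<phi> S"
    and fg: "\<And>n. n \<in> S \<Longrightarrow> f n \<le> g (\<phi> n)" and sg: "summable g" and g0: "\<And>k. 0 \<le> g k"
  shows "f summable_on S" "infsum f S \<le> suminf g"
proof -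
  have fin: "sum f F \<le> suminf g" if "finite F" "F \<subseteq> S" for F
  proof -
    have "sum f F \<le> sum (g \<circ> \<phi>) F" using fg that by (intro sum_mono) auto
    also have "\<dots> = sum g (\<phi> ` F)" using inj that by (simp add: sum.reindex inj_on_subset)
    also have "\<dots> \<le> suminf g" using sg that g0 by (intro sum_le_suminf) auto
    finally show ?thesis .
  qed
  show sf: "f summable_on S"
    apply (rule nonneg_bdd_above_summable_on)
    using f0 fin by (auto simp: bdd_above_def)
  show "infsum f S \<le> suminf g" using sf fin by (rule infsum_le_finite_sums)
qed

definition enc :: "int \<Rightarrow> nat" where
  "enc i = (if 0 \<le> i then 2 * nat i else 2 * nat (- i) - 1)"

lemma enc_parity: "even (enc i) \<longleftrightarrow> 0 \<le> i"
proof (cases "0 \<le> i")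
  case True
  then show ?thesis unfolding enc_def by simp
next
  case False
  obtain k where k: "nat (- i) = Suc k" using False by (cases "nat (- i)") auto
  have "enc i = 2 * k + 1" unfolding enc_def using False k by simp
  then show ?thesis using False by simp
qed

lemma enc_inj: "inj enc"
proof (rule injI)
  fix x y assume e: "enc x = enc y"
  then have "0 \<le> x \<longleftrightarrow> 0 \<le> y" using enc_parity by metis
  then show "x = y" using e unfolding enc_def by (auto split: if_splits)
qed

lemma enc_bound: "real (enc i) + 1 \<le> 2 * (\<bar>real_of_int i\<bar> + 1)"
  unfolding enc_def by (auto simp: of_nat_diff)

lemma singleton_le_infsum:
  fixes f :: "int \<Rightarrow> real"
  assumes "f summable_on S" "x \<in> S" "\<And>n. n \<in> S \<Longrightarrow> 0 \<le> f n"
  shows "f x \<le> infsum f S"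
proof -
  have "infsum f {x} \<le> infsum f S"
    using assms by (intro infsum_mono_neutral) auto
  then show ?thesis by simp
qed


lemma pow_bound:
  fixes m e x :: real
  assumes m0: "0 < m" and h: "m * (e + 1) \<le> 640 * x" and e0: "0 \<le> e" and j: "2 \<le> j"
  shows "1 / x^j \<le> (640 / m)^j * (1 / (e + 1)^2)"
proof -
  have x0: "0 < x" using h m0 e0 by (smt (verit) mult_pos_pos)
  have mp: "0 < m * (e + 1)" using m0 e0 by simp
  have "1 / x \<le> 640 / (m * (e + 1))" using h x0 mp by (simp add: divide_simps mult.commute)
  then have "(1 / x)^j \<le> (640 / (m * (e + 1)))^j" using x0 by (intro power_mono) auto
  also have "(640 / (m * (e + 1)))^j = (640 / m)^j * (1 / (e + 1))^j" by (simp add: power_mult_distrib[symmetric])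
  also have "\<dots> \<le> (640 / m)^j * (1 / (e + 1))^2"
    using e0 m0 j by (intro mult_left_mono power_decreasing) auto
  finally show ?thesis by (simp add: power_one_over)
qed


theorem lemma13:
  shows "\<exists>C>0. \<forall>a b :: real. modtau a \<noteq> modtau b \<and> (0::int) \<notin> Zarc a b \<longrightarrow>
    (\<Sum>\<^sub>\<infinity>n\<in>Zarc a b. 1 / \<bar>real_of_int n\<bar> ^ 3)
      \<le> C * ((\<Sum>\<^sub>\<infinity>n\<in>Zarc a b. 1 / \<bar>real_of_int n\<bar> ^ 5)
               / (\<Sum>\<^sub>\<infinity>n\<in>Zarc a b. 1 / (real_of_int n) ^ 2))"
proof -
  define K :: real where "K = pi^2 / 6"
  have Ks: "(\<lambda>n. 1 / (1 + real n)^2) sums K" unfolding K_def using inverse_squares_sums by simp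
  have K0: "K > 0" unfolding K_def by simp
  show ?thesis
  proof (intro exI[of _ "640^5 * K^2"] conjI allI impI)
    show "0 < 640^5 * K^2" using K0 by simp
    fix a b :: real assume ab: "modtau a \<noteq> modtau b \<and> (0::int) \<notin> Zarc a b"
    define S where "S = Zarc a b"
    define L where "L = modtau (b - a)"
    have Lt: "L < tau" and Lge: "0 \<le> L" unfolding L_def by (rule modtau_range)+
    have L0: "0 < L"
    proof (rule ccontr)
      assume "\<not> 0 < L"
      then have "modtau (b - a) = 0" using Lge unfolding L_def by simp
      moreover obtain j where "modtau (b - a) = b - a - tau * of_int j" using modtau_diff by blast
      ultimately have "b = a + tau * of_int j" by simp
      then have "modtau b = modtau a" by (simp add: modtau_shift)
      then show False using ab by simp
    qed
    obtain n0 :: int where n0: "0 < modtau (of_int n0 - a)" "modtau (of_int n0 - a) < L" "L * \<bar>of_int n0\<bar> \<le> 80"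
      using density[OF L0 Lt, of a] by blast
    have n0S: "n0 \<in> S" unfolding S_def Zarc_def in_arc_def using n0 L_def by simp
    obtain nm where nm: "nm \<in> S" "\<forall>y. y \<in> S \<longrightarrow> nat \<bar>nm\<bar> \<le> nat \<bar>y\<bar>"
      using ex_has_least_nat[of "\<lambda>n. n \<in> S" n0 "\<lambda>n. nat \<bar>n\<bar>"] n0S by blast
    define m where "m = \<bar>real_of_int nm\<bar>"
    have nm0: "nm \<noteq> 0" using nm(1) ab unfolding S_def by auto
    have m1: "1 \<le> m" unfolding m_def using nm0 by linarith
    have mle: "m \<le> \<bar>real_of_int n\<bar>" if "n \<in> S" for n
    proof -
      have "nat \<bar>nm\<bar> \<le> nat \<bar>n\<bar>" using nm(2) that by blast
      then have "\<bar>nm\<bar> \<le> \<bar>n\<bar>" by simp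
      then show ?thesis unfolding m_def by linarith
    qed
    have Lm: "L * m \<le> 80"
    proof -
      have "L * m \<le> L * \<bar>of_int n0\<bar>" using mle[OF n0S] L0 by simp
      then show ?thesis using n0(3) by linarith
    qed
    define \<phi>0 where "\<phi>0 n = \<lfloor>2 * L * real_of_int n\<rfloor>" for n
    have inj0: "inj_on \<phi>0 S"
    proof (rule inj_onI)
      fix x y assume xS: "x \<in> S" and yS: "y \<in> S" and e: "\<phi>0 x = \<phi>0 y"
      show "x = y"
      proof (rule ccontr)
        assume "x \<noteq> y"
        then have g: "1 < 2 * L * \<bar>real_of_int x - real_of_int y\<bar>"
          using gap xS yS unfolding S_def L_def by blast
        have "\<bar>2 * L * real_of_int x - 2 * L * real_of_int y\<bar> < 1"
          using e unfolding \<phi>0_def by linarith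
        moreover have "\<bar>2 * L * real_of_int x - 2 * L * real_of_int y\<bar> = 2 * L * \<bar>real_of_int x - real_of_int y\<bar>"
        proof -
          have "2 * L * real_of_int x - 2 * L * real_of_int y = (2 * L) * (real_of_int x - real_of_int y)"
            by (simp add: right_diff_distrib)
          then show ?thesis using L0 by (simp add: abs_mult)
        qed
        ultimately show False using g by simp
      qed
    qed
    define \<phi> where "\<phi> = enc \<circ> \<phi>0"
    have inj: "inj_on \<phi> S" unfolding \<phi>_def
      by (rule comp_inj_on[OF inj0 inj_on_subset[OF enc_inj subset_UNIV]])
    have key: "m * (real (\<phi> n) + 1) \<le> 640 * \<bar>real_of_int n\<bar>" if nS: "n \<in> S" for n
    proof -
      define i where "i = \<phi>0 n"
      have fl: "real_of_int i \<le> 2 * L * real_of_int n" "2 * L * real_of_int n < real_of_int i + 1"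
        unfolding i_def \<phi>0_def by linarith+
      have b1: "m * (\<bar>real_of_int i\<bar> + 1) \<le> 320 * \<bar>real_of_int n\<bar>"
      proof (cases "\<bar>real_of_int i\<bar> \<le> 3")
        case True
        have "m * (\<bar>real_of_int i\<bar> + 1) \<le> m * 4" using True m1 by (intro mult_left_mono) auto
        also have "\<dots> \<le> 320 * \<bar>real_of_int n\<bar>" using mle[OF nS] by simp
        finally show ?thesis .
      next
        case False
        have "\<bar>2 * L * real_of_int n\<bar> \<ge> \<bar>real_of_int i\<bar> - 1" using fl by linarith
        then have "2 * L * \<bar>real_of_int n\<bar> \<ge> \<bar>real_of_int i\<bar> - 1" using L0 by (simp add: abs_mult)
        then have A: "4 * L * \<bar>real_of_int n\<bar> \<ge> \<bar>real_of_int i\<bar> + 1" using False by linarith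
        have "L * (m * (\<bar>real_of_int i\<bar> + 1)) = (L * m) * (\<bar>real_of_int i\<bar> + 1)" by simp
        also have "\<dots> \<le> 80 * (\<bar>real_of_int i\<bar> + 1)" using Lm by (intro mult_right_mono) auto
        also have "\<dots> \<le> 80 * (4 * L * \<bar>real_of_int n\<bar>)" using A by simp
        also have "\<dots> = L * (320 * \<bar>real_of_int n\<bar>)" by simp
        finally show ?thesis using L0 by (simp only: mult_le_cancel_left_pos)
      qed
      have "real (\<phi> n) + 1 \<le> 2 * (\<bar>real_of_int i\<bar> + 1)" unfolding \<phi>_def i_def using enc_bound[of "\<phi>0 n"] by simp
      then have "m * (real (\<phi> n) + 1) \<le> m * (2 * (\<bar>real_of_int i\<bar> + 1))" using m1 by (intro mult_left_mono) auto
      then show ?thesis using b1 by linarith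
    qed
    have SB: "(\<lambda>n. 1 / \<bar>real_of_int n\<bar> ^ j) summable_on S \<and>
        infsum (\<lambda>n. 1 / \<bar>real_of_int n\<bar> ^ j) S \<le> (640 / m)^j * K" if j2: "2 \<le> j" for j
    proof -
      define g where "g k = (640 / m)^j * (1 / (1 + real k)^2)" for k
      have sg: "summable g" unfolding g_def using Ks by (intro summable_mult) (rule sums_summable)
      have gs: "suminf g = (640 / m)^j * K" unfolding g_def using Ks
        by (subst suminf_mult) (auto simp: sums_unique[symmetric] sums_summable)
      have h0: "\<And>n. n \<in> S \<Longrightarrow> 0 \<le> 1 / \<bar>real_of_int n\<bar> ^ j" by simp
      have hg0: "\<And>k. 0 \<le> g k" unfolding g_def using m1 by simp
      have hfg: "1 / \<bar>real_of_int n\<bar> ^ j \<le> g (\<phi> n)" if nS: "n \<in> S" for n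
      proof -
        have "1 / \<bar>real_of_int n\<bar> ^ j \<le> (640 / m)^j * (1 / (real (\<phi> n) + 1)^2)"
          using pow_bound[of m "real (\<phi> n)" "\<bar>real_of_int n\<bar>" j] key[OF nS] m1 j2 by simp
        then show ?thesis unfolding g_def by (simp add: add.commute)
      qed
      note r = sum_bound[of S "\<lambda>n. 1 / \<bar>real_of_int n\<bar> ^ j", OF h0 inj hfg sg hg0]
      show ?thesis using r gs by simp
    qed
    have sq: "(\<lambda>n. 1 / (real_of_int n) ^ 2) = (\<lambda>n. 1 / \<bar>real_of_int n\<bar> ^ 2)" by simp
    define A3 where "A3 = infsum (\<lambda>n. 1 / \<bar>real_of_int n\<bar> ^ 3) S"
    define A5 where "A5 = infsum (\<lambda>n. 1 / \<bar>real_of_int n\<bar> ^ 5) S"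
    define A2 where "A2 = infsum (\<lambda>n. 1 / \<bar>real_of_int n\<bar> ^ 2) S"
    have A3le: "A3 \<le> (640 / m)^3 * K" unfolding A3_def using SB[of 3] by simp
    have A2le: "A2 \<le> (640 / m)^2 * K" unfolding A2_def using SB[of 2] by simp
    have A2ge: "1 / m^2 \<le> A2" unfolding A2_def m_def
      using singleton_le_infsum[of "\<lambda>n. 1 / \<bar>real_of_int n\<bar> ^ 2" S nm] SB[of 2] nm(1) by simp
    have A5ge: "1 / m^5 \<le> A5" unfolding A5_def m_def
      using singleton_le_infsum[of "\<lambda>n. 1 / \<bar>real_of_int n\<bar> ^ 5" S nm] SB[of 5] nm(1) by simp
    have m0: "0 < m" using m1 by simp
    have p5: "0 < 1 / m^5" using m0 by simp
    have p2: "0 < 1 / m^2" using m0 by simp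
    have A5p: "0 \<le> A5" using A5ge p5 by linarith
    have A2p: "0 < A2" using A2ge p2 by linarith
    have "(640 / m)^3 * K = 640^5 * K^2 * ((1 / m^5) / ((640 / m)^2 * K))"
      using m0 K0 by (simp add: field_simps power_divide eval_nat_numeral)
    also have "\<dots> \<le> 640^5 * K^2 * (A5 / A2)"
      using A5ge A2le A2ge m0 K0 p5 A5p A2p by (intro mult_left_mono frac_le) auto
    finally have "A3 \<le> 640^5 * K^2 * (A5 / A2)" using A3le by linarith
    then show "(\<Sum>\<^sub>\<infinity>n\<in>Zarc a b. 1 / \<bar>real_of_int n\<bar> ^ 3)
      \<le> 640^5 * K^2 * ((\<Sum>\<^sub>\<infinity>n\<in>Zarc a b. 1 / \<bar>real_of_int n\<bar> ^ 5)
               / (\<Sum>\<^sub>\<infinity>n\<in>Zarc a b. 1 / (real_of_int n) ^ 2))"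
      unfolding sq A3_def A5_def A2_def S_def .
  qed
qed


end
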